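(* Let $\beta\colon[0,\infty)\to(0,1)$ be continuous, let $D$ be the multistable subordinator with index $\beta$ and let $E(r)=\inf\{t\ge0: D(t)\ge r\}$, $r\ge0$, be its right-continuous inverse (see the context). Then the sample paths of $E$ are almost surely continuous and non-decreasing.
   Context: Let $\beta\colon[0,\infty)\to(0,1)$ be a continuous function. Let $\Pi=\{(t_i,x_i)\}$ be a Poisson point process on $[0,\infty)\times(0,\infty)$ with intensity measure $\nu(dt,dx)=\beta(t)x^{-\beta(t)-1}\,dt\,dx$. The multistable subordinator with index $\beta$ is the process $D(t)=\sum_{(t_i,x_i)\in\Pi,\ t_i\le t}x_i$, $t\ge0$ (this sum is a.s. finite since $\int_0^t(1-\beta(s))^{-1}ds<\infty$). *)

theory Defs
  imports "HOL-Probability.Probability"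
begin

definition ms_intensity :: "(real \<Rightarrow> real) \<Rightarrow> (real \<times> real) measure" where
  "ms_intensity \<beta> = density lborel
     (\<lambda>(t, x). if 0 \<le> t \<and> 0 < x then ennreal (\<beta> t * x powr (- \<beta> t - 1)) else 0)"

definition pp_count :: "'p set \<Rightarrow> 'p set \<Rightarrow> ennreal" where
  "pp_count P B = (if finite (P \<inter> B) then of_nat (card (P \<inter> B)) else \<infinity>)"

definition poisson_point_process ::
  "'a measure \<Rightarrow> ('a \<Rightarrow> 'p set) \<Rightarrow> 'p set \<Rightarrow> 'p measure \<Rightarrow> bool" where
  "poisson_point_process M P S \<nu> \<longleftrightarrow>
     prob_space M \<and>
     (\<forall>\<omega>\<in>space M. P \<omega> \<subseteq> S) \<and>
     (\<forall>B \<in> sets \<nu>.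
        (\<lambda>\<omega>. pp_count (P \<omega>) B) \<in> borel_measurable M \<and>
        (emeasure \<nu> B < \<infinity> \<longrightarrow>
           (\<forall>k::nat. measure M {\<omega> \<in> space M. pp_count (P \<omega>) B = of_nat k}
                = exp (- enn2real (emeasure \<nu> B)) * enn2real (emeasure \<nu> B) ^ k / fact k)) \<and>
        (emeasure \<nu> B = \<infinity> \<longrightarrow> (AE \<omega> in M. pp_count (P \<omega>) B = \<infinity>))) \<and>
     (\<forall>(n::nat) Bs. (\<forall>i<n. Bs i \<in> sets \<nu>) \<longrightarrow> disjoint_family_on Bs {..<n} \<longrightarrow>
        prob_space.indep_vars M (\<lambda>_. borel) (\<lambda>i \<omega>. pp_count (P \<omega>) (Bs i)) {..<n})"

definition ms_subordinator :: "('a \<Rightarrow> (real \<times> real) set) \<Rightarrow> 'a \<Rightarrow> real \<Rightarrow> ennreal" where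
  "ms_subordinator P \<omega> t =
     (\<integral>\<^sup>+ p. ennreal (snd p) \<partial>count_space {p \<in> P \<omega>. fst p \<le> t})"

definition ms_inverse :: "('a \<Rightarrow> (real \<times> real) set) \<Rightarrow> 'a \<Rightarrow> real \<Rightarrow> real" where
  "ms_inverse P \<omega> r = Inf {t. 0 \<le> t \<and> ennreal r \<le> ms_subordinator P \<omega> t}"

end

theory Submission imports Defs begin
lemma inner1:
  fixes b :: real assumes "0 < b"
  shows "(\<integral>\<^sup>+ x. ennreal (b * x powr (-b-1)) * indicator {1..} x \<partial>lborel) = 1"
proof -
  have "((\<lambda>x. x powr (-b-1)) has_integral -(1 powr (-b-1+1)) / (-b-1+1)) {1..}"
    by (rule has_integral_powr_to_inf) (use assms in auto)
  then have "((\<lambda>x. x powr (-b-1)) has_integral 1/b) {1..}" by simp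
  then have "((\<lambda>x. b * x powr (-b-1)) has_integral b * (1/b)) {1..}"
    by (rule has_integral_mult_right)
  then have "((\<lambda>x. b * x powr (-b-1)) has_integral 1) {1..}" using assms by simp
  from nn_integral_has_integral_lebesgue'[OF _ this] assms show ?thesis by simp
qed

lemma inner2:
  fixes b :: real assumes "0 < b"
  shows "(\<integral>\<^sup>+ x. ennreal (b * x powr (-b-1)) * indicator {0<..} x \<partial>lborel) = \<infinity>"
proof -
  have "ennreal N \<le> (\<integral>\<^sup>+ x. ennreal (b * x powr (-b-1)) * indicator {0<..} x \<partial>lborel)"
    if N: "N \<ge> 1" for N
  proof -
    define c where "c = N powr (-1/b)"
    have c: "c > 0" using N by (simp add: c_def)
    have cb: "c powr (-b) = N" using N assms unfolding c_def powr_powr by simp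
    have "((\<lambda>x. x powr (-b-1)) has_integral -(c powr (-b-1+1)) / (-b-1+1)) {c..}"
      by (rule has_integral_powr_to_inf) (use assms c in auto)
    then have "((\<lambda>x. x powr (-b-1)) has_integral N/b) {c..}" using cb by simp
    then have "((\<lambda>x. b * x powr (-b-1)) has_integral b * (N/b)) {c..}"
      by (rule has_integral_mult_right)
    then have "((\<lambda>x. b * x powr (-b-1)) has_integral N) {c..}" using assms by simp
    from nn_integral_has_integral_lebesgue'[OF _ this] assms
    have "ennreal N = (\<integral>\<^sup>+ x. ennreal (b * x powr (-b-1)) * indicator {c..} x \<partial>lborel)" by simp
    also have "\<dots> \<le> (\<integral>\<^sup>+ x. ennreal (b * x powr (-b-1)) * indicator {0<..} x \<partial>lborel)"
      using c by (intro nn_integral_mono) (auto simp: indicator_def)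
    finally show ?thesis by simp
  qed
  note h = this
  define I where "I = (\<integral>\<^sup>+ x. ennreal (b * x powr (-b-1)) * indicator {0<..} x \<partial>lborel)"
  have "I = \<infinity>"
  proof (cases I rule: ennreal_cases)
    case (real r)
    with h[of "r+1"] show ?thesis unfolding I_def by simp
  qed simp
  then show ?thesis unfolding I_def .
qed
definition bb :: "(real \<Rightarrow> real) \<Rightarrow> real \<Rightarrow> real" where "bb \<beta> t = \<beta> (max 0 t)"

lemma bb_cont: "continuous_on {0..} \<beta> \<Longrightarrow> continuous_on UNIV (bb \<beta>)"
  unfolding bb_def
  by (rule continuous_on_compose2[where t="{0..}"]) (auto intro: continuous_intros)

lemma dens_eq:
  "(\<lambda>(t, x). if 0 \<le> t \<and> 0 < x then ennreal (\<beta> t * x powr (- \<beta> t - 1)) else 0)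
   = (\<lambda>(t, x). if 0 \<le> t \<and> 0 < x then ennreal (bb \<beta> t * x powr (- bb \<beta> t - 1)) else 0)"
  by (auto simp: bb_def fun_eq_iff max_def)

lemma dens_meas:
  assumes "continuous_on {0..} \<beta>"
  shows "(\<lambda>(t, x). if 0 \<le> t \<and> 0 < x then ennreal (bb \<beta> t * x powr (- bb \<beta> t - 1)) else 0)
     \<in> borel_measurable (lborel \<Otimes>\<^sub>M lborel :: (real \<times> real) measure)"
proof -
  have c: "bb \<beta> \<in> borel_measurable borel"
    using bb_cont[OF assms] by (intro borel_measurable_continuous_onI) simp
  show ?thesis using c by measurable
qed

lemma sets_ms: "sets (ms_intensity \<beta>) = sets (borel :: (real\<times>real) measure)"
  by (simp add: ms_intensity_def)

lemma nu_eq: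
  assumes "continuous_on {0..} \<beta>" "B \<in> sets (borel :: (real\<times>real) measure)"
  shows "emeasure (ms_intensity \<beta>) B =
    (\<integral>\<^sup>+ t. \<integral>\<^sup>+ x. (if 0 \<le> t \<and> 0 < x then ennreal (bb \<beta> t * x powr (- bb \<beta> t - 1)) else 0)
        * indicator B (t, x) \<partial>lborel \<partial>lborel)"
proof -
  have m: "(\<lambda>(t, x). if 0 \<le> t \<and> 0 < x then ennreal (bb \<beta> t * x powr (- bb \<beta> t - 1)) else 0)
     \<in> borel_measurable (lborel :: (real \<times> real) measure)"
    using dens_meas[OF assms(1)] unfolding lborel_prod .
  have "emeasure (ms_intensity \<beta>) B = (\<integral>\<^sup>+ p. (\<lambda>(t, x). if 0 \<le> t \<and> 0 < x then ennreal (bb \<beta> t * x powr (- bb \<beta> t - 1)) else 0) p * indicator B p \<partial>lborel)"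
    unfolding ms_intensity_def dens_eq[of \<beta>] using m assms(2)
    by (subst emeasure_density) auto
  also have "\<dots> = (\<integral>\<^sup>+ p. (\<lambda>(t, x). if 0 \<le> t \<and> 0 < x then ennreal (bb \<beta> t * x powr (- bb \<beta> t - 1)) else 0) p * indicator B p \<partial>(lborel \<Otimes>\<^sub>M lborel))"
    unfolding lborel_prod ..
  also have "\<dots> = (\<integral>\<^sup>+ t. \<integral>\<^sup>+ x. (if 0 \<le> t \<and> 0 < x then ennreal (bb \<beta> t * x powr (- bb \<beta> t - 1)) else 0)
        * indicator B (t, x) \<partial>lborel \<partial>lborel)"
    using m assms(2)
    by (subst lborel.nn_integral_fst[symmetric]) (auto simp: lborel_prod)
  finally show ?thesis .
qed

lemma ennreal_unbounded: "(\<And>n::nat. ennreal (real n) \<le> X) \<Longrightarrow> X = \<infinity>"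
proof (cases X rule: ennreal_cases)
  case (real r)
  assume h: "\<And>n::nat. ennreal (real n) \<le> X"
  obtain n::nat where "r < real n" using reals_Archimedean2 by blast
  with h[of n] real show ?thesis by simp
qed simp

lemma times_borel: "(A::real set) \<in> sets borel \<Longrightarrow> (B::real set) \<in> sets borel \<Longrightarrow> A \<times> B \<in> sets borel"
  using pair_measureI[of A borel B borel] borel_prod by metis

lemma lborel_Ici_inf: "emeasure lborel {0::real..} = \<infinity>"
proof (rule ennreal_unbounded)
  fix n :: nat
  have "ennreal (real n) = emeasure lborel {0..real n}" by simp
  also have "\<dots> \<le> emeasure lborel {0::real..}" by (rule emeasure_mono) auto
  finally show "ennreal (real n) \<le> emeasure lborel {0::real..}" .
qed

lemma nu_U:
  assumes "continuous_on {0..} \<beta>" "\<And>t. 0 \<le> t \<Longrightarrow> 0 < \<beta> t \<and> \<beta> t < 1"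
  shows "emeasure (ms_intensity \<beta>) ({0..} \<times> {1..}) = \<infinity>"
proof -
  have inner: "(\<integral>\<^sup>+ x. (if 0 \<le> t \<and> 0 < x then ennreal (bb \<beta> t * x powr (- bb \<beta> t - 1)) else 0)
        * indicator ({0..} \<times> {1..}) (t, x) \<partial>lborel) = indicator {0..} t" for t
  proof (cases "0 \<le> t")
    case True
    have "bb \<beta> t > 0" using assms(2)[OF True] True by (simp add: bb_def)
    from inner1[OF this] have "(\<integral>\<^sup>+ x. ennreal (bb \<beta> t * x powr (- bb \<beta> t - 1)) * indicator {1..} x \<partial>lborel) = 1" by simp
    moreover have "(\<integral>\<^sup>+ x. (if 0 \<le> t \<and> 0 < x then ennreal (bb \<beta> t * x powr (- bb \<beta> t - 1)) else 0)
        * indicator ({0..} \<times> {1..}) (t, x) \<partial>lborel) = (\<integral>\<^sup>+ x. ennreal (bb \<beta> t * x powr (- bb \<beta> t - 1)) * indicator {1..} x \<partial>lborel)"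
      using True by (intro nn_integral_cong) (auto simp: indicator_def)
    ultimately show ?thesis using True by simp
  next
    case False
    then show ?thesis by (simp add: indicator_def)
  qed
  have "emeasure (ms_intensity \<beta>) ({0..} \<times> {1..}) = emeasure lborel {0::real..}"
    by (subst nu_eq[OF assms(1)]) (auto intro!: times_borel simp: inner)
  also have "\<dots> = \<infinity>" by (rule lborel_Ici_inf)
  finally show ?thesis .
qed

lemma nu_S:
  assumes "continuous_on {0..} \<beta>" "\<And>t. 0 \<le> t \<Longrightarrow> 0 < \<beta> t \<and> \<beta> t < 1"
    and "0 \<le> a" "a < b"
  shows "emeasure (ms_intensity \<beta>) ({a<..b} \<times> {0<..}) = \<infinity>"
proof -
  have inner: "(\<integral>\<^sup>+ x. (if 0 \<le> t \<and> 0 < x then ennreal (bb \<beta> t * x powr (- bb \<beta> t - 1)) else 0)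
        * indicator ({a<..b} \<times> {0<..}) (t, x) \<partial>lborel) = \<infinity> * indicator {a<..b} t" for t
  proof (cases "t \<in> {a<..b}")
    case True
    then have t0: "0 \<le> t" using assms by auto
    have "bb \<beta> t > 0" using assms(2)[OF t0] t0 by (simp add: bb_def)
    from inner2[OF this] have "(\<integral>\<^sup>+ x. ennreal (bb \<beta> t * x powr (- bb \<beta> t - 1)) * indicator {0<..} x \<partial>lborel) = \<infinity>" by simp
    moreover have "(\<integral>\<^sup>+ x. (if 0 \<le> t \<and> 0 < x then ennreal (bb \<beta> t * x powr (- bb \<beta> t - 1)) else 0)
        * indicator ({a<..b} \<times> {0<..}) (t, x) \<partial>lborel) = (\<integral>\<^sup>+ x. ennreal (bb \<beta> t * x powr (- bb \<beta> t - 1)) * indicator {0<..} x \<partial>lborel)"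
      using True t0 by (intro nn_integral_cong) (auto simp: indicator_def)
    ultimately show ?thesis using True by simp
  next
    case False
    then have z: "\<And>x. indicator ({a<..b} \<times> {0<..}) (t,x) = (0::ennreal)" by (auto simp: indicator_def)
    show ?thesis using False by (simp only: z mult_zero_right) simp
  qed
  have "emeasure (ms_intensity \<beta>) ({a<..b} \<times> {0<..}) = (\<integral>\<^sup>+ t. \<infinity> * indicator {a<..b} t \<partial>lborel)"
    by (subst nu_eq[OF assms(1)]) (auto intro!: times_borel simp: inner)
  also have "\<dots> = \<infinity>" using assms by (simp add: nn_integral_cmult_indicator ennreal_mult_top)
  finally show ?thesis .
qed
lemma key_add:
  assumes "finite F" "F \<subseteq> PP \<omega>" "\<forall>p\<in>F. s < fst p \<and> fst p \<le> t" "s \<le> t"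
  shows "ms_subordinator PP \<omega> s + (\<Sum>p\<in>F. ennreal (snd p)) \<le> ms_subordinator PP \<omega> t"
proof -
  let ?f = "\<lambda>p::real\<times>real. ennreal (snd p)"
  have sF: "(\<Sum>p\<in>F. ennreal (snd p)) = (\<integral>\<^sup>+ p. ?f p * indicator F p \<partial>count_space UNIV)"
    using assms(1) by (subst nn_integral_indicator_finite) auto
  have "ms_subordinator PP \<omega> s + (\<Sum>p\<in>F. ennreal (snd p)) =
     (\<integral>\<^sup>+ p. ?f p * indicator {p \<in> PP \<omega>. fst p \<le> s} p \<partial>count_space UNIV) + (\<integral>\<^sup>+ p. ?f p * indicator F p \<partial>count_space UNIV)"
    unfolding ms_subordinator_def sF by (subst nn_integral_count_space_indicator) auto
  also have "\<dots> = (\<integral>\<^sup>+ p. ?f p * indicator {p \<in> PP \<omega>. fst p \<le> s} p + ?f p * indicator F p \<partial>count_space UNIV)"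
    by (rule nn_integral_add[symmetric]) auto
  also have "\<dots> \<le> (\<integral>\<^sup>+ p. ?f p * indicator {p \<in> PP \<omega>. fst p \<le> t} p \<partial>count_space UNIV)"
    using assms by (intro nn_integral_mono) (auto simp: indicator_def)
  also have "\<dots> = ms_subordinator PP \<omega> t"
    unfolding ms_subordinator_def by (subst nn_integral_count_space_indicator) auto
  finally show ?thesis .
qed

lemma D_mono: "s \<le> t \<Longrightarrow> ms_subordinator PP \<omega> s \<le> ms_subordinator PP \<omega> t"
  using key_add[of "{}" PP \<omega> s t] by simp


lemma A_nonempty:
  assumes sub: "PP \<omega> \<subseteq> {0..} \<times> {0<..}"
    and U: "infinite (PP \<omega> \<inter> ({0..} \<times> {1..}))"
  shows "\<exists>t\<ge>0. ennreal r \<le> ms_subordinator PP \<omega> t"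
proof -
  obtain n :: nat where n: "r \<le> real n" using real_arch_simple by blast
  obtain F where F: "finite F" "card F = n" "F \<subseteq> PP \<omega> \<inter> ({0..} \<times> {1..})"
    using infinite_arbitrarily_large[OF U] by blast
  define t where "t = Max (insert 0 (fst ` F))"
  have t0: "t \<ge> 0" unfolding t_def using F(1) by simp
  have ft: "\<forall>p\<in>F. -1 < fst p \<and> fst p \<le> t"
    using F unfolding t_def by (auto intro: Max_ge)
  have "ennreal r \<le> ennreal (real n)" using n by simp
  also have "\<dots> = (\<Sum>p\<in>F. (1::ennreal))" using F by (simp add: ennreal_of_nat_eq_real_of_nat)
  also have "\<dots> \<le> (\<Sum>p\<in>F. ennreal (snd p))"
    using F by (intro sum_mono) auto
  also have "\<dots> \<le> ms_subordinator PP \<omega> (-1) + (\<Sum>p\<in>F. ennreal (snd p))" by simp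
  also have "\<dots> \<le> ms_subordinator PP \<omega> t"
    using F ft t0 by (intro key_add) auto
  finally show ?thesis using t0 by blast
qed

lemma det_main:
  assumes sub: "PP \<omega> \<subseteq> {0..} \<times> {0<..}"
    and U: "infinite (PP \<omega> \<inter> ({0..} \<times> {1..}))"
    and S: "\<forall>a\<in>\<rat>. \<forall>b\<in>\<rat>. 0 \<le> a \<longrightarrow> a < b \<longrightarrow> (\<exists>p\<in>PP \<omega>. a < fst p \<and> fst p \<le> b)"
  shows "continuous_on {0..} (ms_inverse PP \<omega>) \<and> mono_on {0..} (ms_inverse PP \<omega>)"
proof -
  define D where "D = ms_subordinator PP \<omega>"
  define A where "A r = {t. 0 \<le> t \<and> ennreal r \<le> D t}" for r
  have E: "ms_inverse PP \<omega> r = Inf (A r)" for r unfolding ms_inverse_def A_def D_def ..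
  have ne: "A r \<noteq> {}" for r using A_nonempty[where PP=PP and \<omega>=\<omega> and r=r, OF sub U] unfolding A_def D_def by blast
  have bdd: "bdd_below (A r)" for r unfolding A_def by (auto intro: bdd_belowI[of _ 0])
  have E0: "0 \<le> Inf (A r)" for r using ne[of r] by (intro cInf_greatest) (auto simp: A_def)
  have Dm: "s \<le> t \<Longrightarrow> D s \<le> D t" for s t unfolding D_def by (rule D_mono)
  have mono: "mono_on {0..} (ms_inverse PP \<omega>)"
  proof (rule mono_onI)
    fix r r' :: real assume "r \<le> r'"
    then have "A r' \<subseteq> A r" unfolding A_def
      by (auto intro: order_trans[OF ennreal_leI])
    then show "ms_inverse PP \<omega> r \<le> ms_inverse PP \<omega> r'"
      unfolding E using ne bdd by (intro cInf_superset_mono) auto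
  qed
  have cont: "continuous_on {0..} (ms_inverse PP \<omega>)"
    unfolding continuous_on_iff
  proof (intro ballI allI impI)
    fix r0 :: real and \<epsilon> :: real
    assume r0: "r0 \<in> {0..}" and eps: "0 < \<epsilon>"
    define e where "e = Inf (A r0)"
    obtain t where t: "t \<in> A r0" "t < e + \<epsilon>/2"
      using cInf_lessD[OF ne[of r0], of "e + \<epsilon>/2"] eps unfolding e_def by auto
    obtain a where a: "a \<in> \<rat>" "t < a" "a < e + \<epsilon>" using Rats_dense_in_real[of t "e + \<epsilon>"] t eps by auto
    obtain b where b: "b \<in> \<rat>" "a < b" "b < e + \<epsilon>" using Rats_dense_in_real[of a "e + \<epsilon>"] a by auto
    have t0: "0 \<le> t" using t unfolding A_def by auto
    obtain p where p: "p \<in> PP \<omega>" "a < fst p" "fst p \<le> b" using S a b t0 by force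
    have sp: "0 < snd p" using p sub by auto
    have "D a + (\<Sum>q\<in>{p}. ennreal (snd q)) \<le> D b"
      unfolding D_def using p b by (intro key_add) auto
    then have Dab: "D a + ennreal (snd p) \<le> D b" by simp
    have "ennreal r0 \<le> D a" using t Dm[of t a] a unfolding A_def by auto
    then have "ennreal (r0 + snd p) \<le> D b" using Dab sp r0
      by (metis add_right_mono ennreal_plus order_trans atLeast_iff less_imp_le)
    then have right: "Inf (A r) < e + \<epsilon>" if "0 \<le> r" "r \<le> r0 + snd p" for r
    proof -
      have "b \<in> A r" unfolding A_def using that \<open>ennreal (r0 + snd p) \<le> D b\<close> b a t0
        by (auto intro: order_trans[OF ennreal_leI])
      then have "Inf (A r) \<le> b" using bdd by (intro cInf_lower) auto
      then show ?thesis using b by simp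
    qed
    obtain \<delta>2 where d2: "\<delta>2 > 0" and left: "\<And>r. r0 - \<delta>2 < r \<Longrightarrow> e - \<epsilon> < Inf (A r)"
    proof (cases "e - \<epsilon> < 0")
      case True
      show ?thesis
      proof (rule that[of 1])
        fix r show "e - \<epsilon> < Inf (A r)" using True E0[of r] by linarith
      qed simp
    next
      case False
      define a where "a = e - \<epsilon>/2"
      have a0: "0 \<le> a" using False eps unfolding a_def by simp
      have "a \<notin> A r0"
      proof
        assume "a \<in> A r0"
        then have "e \<le> a" unfolding e_def using bdd by (intro cInf_lower) auto
        then show False using eps unfolding a_def by simp
      qed
      then have Da: "D a < ennreal r0" using a0 unfolding A_def by auto
      then obtain d where d: "D a = ennreal d" "0 \<le> d" "d < r0"
        by (cases "D a" rule: ennreal_cases) (auto simp: ennreal_less_iff)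
      show ?thesis
      proof (rule that[of "r0 - d"])
        show "0 < r0 - d" using d by simp
        fix r assume r: "r0 - (r0 - d) < r"
        have "a \<le> Inf (A r)"
        proof (rule cInf_greatest[OF ne])
          fix s assume s: "s \<in> A r"
          show "a \<le> s"
          proof (rule ccontr)
            assume "\<not> a \<le> s"
            then have "D s \<le> D a" using Dm by simp
            moreover have "ennreal r \<le> D s" using s unfolding A_def by simp
            ultimately have "ennreal r \<le> ennreal d" using d(1) by (metis order_trans)
            then show False using r d by (simp add: ennreal_le_iff2)
          qed
        qed
        then show "e - \<epsilon> < Inf (A r)" using eps unfolding a_def by simp
      qed
    qed
    show "\<exists>\<delta>>0. \<forall>r\<in>{0..}. dist r r0 < \<delta> \<longrightarrow> dist (ms_inverse PP \<omega> r) (ms_inverse PP \<omega> r0) < \<epsilon>"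
    proof (intro exI[of _ "min (snd p) \<delta>2"] conjI ballI impI)
      show "0 < min (snd p) \<delta>2" using sp d2 by simp
      fix r :: real assume r: "r \<in> {0..}" "dist r r0 < min (snd p) \<delta>2"
      have "Inf (A r) < e + \<epsilon>" using r by (intro right) (auto simp: dist_real_def)
      moreover have "e - \<epsilon> < Inf (A r)" using r by (intro left) (auto simp: dist_real_def)
      ultimately show "dist (ms_inverse PP \<omega> r) (ms_inverse PP \<omega> r0) < \<epsilon>"
        unfolding E e_def[symmetric] dist_real_def by simp
    qed
  qed
  show ?thesis using cont mono by simp
qed

lemma pp_count_inf: "pp_count P B = (top::ennreal) \<longleftrightarrow> infinite (P \<inter> B)"
  by (simp add: pp_count_def)

theorem mainTheorem4:
  fixes \<beta> :: "real \<Rightarrow> real" and M :: "'a measure" and PP :: "'a \<Rightarrow> (real \<times> real) set"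
  assumes "continuous_on {0..} \<beta>"
    and "\<And>t. 0 \<le> t \<Longrightarrow> 0 < \<beta> t \<and> \<beta> t < 1"
    and "poisson_point_process M PP ({0..} \<times> {0<..}) (ms_intensity \<beta>)"
  shows "AE \<omega> in M. continuous_on {0..} (ms_inverse PP \<omega>) \<and> mono_on {0..} (ms_inverse PP \<omega>)"
proof -
  have sub: "\<And>\<omega>. \<omega> \<in> space M \<Longrightarrow> PP \<omega> \<subseteq> {0..} \<times> {0<..}"
    and inf: "\<And>B. B \<in> sets (ms_intensity \<beta>) \<Longrightarrow> emeasure (ms_intensity \<beta>) B = \<infinity> \<Longrightarrow>
         AE \<omega> in M. pp_count (PP \<omega>) B = \<infinity>"
    using assms(3) unfolding poisson_point_process_def by auto
  have AU: "AE \<omega> in M. infinite (PP \<omega> \<inter> ({0..} \<times> {1..}))"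
    using inf[OF _ nu_U[OF assms(1,2)]] by (simp add: pp_count_inf sets_ms times_borel)
  have AS1: "AE \<omega> in M. \<forall>ab\<in>\<rat>\<times>\<rat>. 0 \<le> fst ab \<longrightarrow> fst ab < snd ab \<longrightarrow>
       infinite (PP \<omega> \<inter> ({fst ab<..snd ab} \<times> {0<..}))"
  proof (rule AE_ball_countable')
    show "countable (\<rat> \<times> \<rat>)" by (intro countable_SIGMA countable_rat)
    fix ab :: "real \<times> real" assume "ab \<in> \<rat> \<times> \<rat>"
    show "AE \<omega> in M. 0 \<le> fst ab \<longrightarrow> fst ab < snd ab \<longrightarrow> infinite (PP \<omega> \<inter> ({fst ab<..snd ab} \<times> {0<..}))"
    proof (cases "0 \<le> fst ab \<and> fst ab < snd ab")
      case True
      then show ?thesis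
        using inf[OF _ nu_S[OF assms(1,2), of "fst ab" "snd ab"]]
        by (simp add: pp_count_inf sets_ms times_borel)
    qed auto
  qed
  show ?thesis
    using AU AS1 AE_space
  proof eventually_elim
    case (elim \<omega>)
    note True = elim(3)
    show ?case
    proof -
      have S: "\<forall>a\<in>\<rat>. \<forall>b\<in>\<rat>. 0 \<le> a \<longrightarrow> a < b \<longrightarrow> (\<exists>p\<in>PP \<omega>. a < fst p \<and> fst p \<le> b)"
      proof (intro ballI impI)
        fix a b :: real assume "a \<in> \<rat>" "b \<in> \<rat>" "0 \<le> a" "a < b"
        then have "infinite (PP \<omega> \<inter> ({a<..b} \<times> {0<..}))" using elim(2) by force
        then obtain p where "p \<in> PP \<omega> \<inter> ({a<..b} \<times> {0<..})"
          by (metis finite.emptyI ex_in_conv)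
        then show "\<exists>p\<in>PP \<omega>. a < fst p \<and> fst p \<le> b" by force
      qed
      show ?thesis by (rule det_main[where PP=PP and \<omega>=\<omega>, OF sub[OF True] elim(1) S])
    qed
  qed
qed

end
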